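(* For a large scale group $G$ the following are equivalent: (1) the large scale structure of $G$ is induced by a metric; (2) the bornology of $G$ has a countable basis; (3) there is a left-invariant metric $d$ on $G$ inducing the large scale structure of $G$.
   Context: A bornology on a set is a cover closed under subsets and finite unions; a basis of a bornology $\mathcal B$ is a subfamily such that every member of $\mathcal B$ is contained in a member of the subfamily. A large scale group is a group $G$ with a bornology $\mathcal B$ closed under inverses and products; its uniformly bounded covers are those refining $\{gB\}_{g\in G}$ for some $B\in\mathcal B$. A metric $d$ induces the large scale structure whose uniformly bounded covers are those covers refining, for some $r>0$, the family of all sets of $d$-diameter at most $r$. $d$ is left-invariant if $d(gx,gy)=d(x,y)$ for all $g,x,y\in G$. *)

theory Defs
  imports "HOL-Algebra.Coset" "HOL-Analysis.Abstract_Metric_Spaces"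
begin

definition bornology :: "'a set \<Rightarrow> 'a set set \<Rightarrow> bool" where
  "bornology X \<B> \<longleftrightarrow>
     \<B> \<subseteq> Pow X \<and> \<Union>\<B> = X \<and>
     (\<forall>A\<in>\<B>. \<forall>C. C \<subseteq> A \<longrightarrow> C \<in> \<B>) \<and>
     (\<forall>A\<in>\<B>. \<forall>C\<in>\<B>. A \<union> C \<in> \<B>)"

definition bornology_basis :: "'a set set \<Rightarrow> 'a set set \<Rightarrow> bool" where
  "bornology_basis \<B> \<C> \<longleftrightarrow> \<C> \<subseteq> \<B> \<and> (\<forall>A\<in>\<B>. \<exists>C\<in>\<C>. A \<subseteq> C)"

definition large_scale_group :: "('a, 'b) monoid_scheme \<Rightarrow> 'a set set \<Rightarrow> bool" where
  "large_scale_group G \<B> \<longleftrightarrow>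
     group G \<and> bornology (carrier G) \<B> \<and>
     (\<forall>A\<in>\<B>. set_inv\<^bsub>G\<^esub> A \<in> \<B>) \<and>
     (\<forall>A\<in>\<B>. \<forall>C\<in>\<B>. A <#>\<^bsub>G\<^esub> C \<in> \<B>)"

definition is_cover :: "'a set \<Rightarrow> 'a set set \<Rightarrow> bool" where
  "is_cover X \<U> \<longleftrightarrow> \<U> \<subseteq> Pow X \<and> \<Union>\<U> = X"

definition refines :: "'a set set \<Rightarrow> 'a set set \<Rightarrow> bool" where
  "refines \<U> \<V> \<longleftrightarrow> (\<forall>U\<in>\<U>. \<exists>V\<in>\<V>. U \<subseteq> V)"

definition group_ub_covers :: "('a, 'b) monoid_scheme \<Rightarrow> 'a set set \<Rightarrow> 'a set set set" where
  "group_ub_covers G \<B> =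
     {\<U>. is_cover (carrier G) \<U> \<and>
          (\<exists>B\<in>\<B>. refines \<U> ((\<lambda>g. g <#\<^bsub>G\<^esub> B) ` carrier G))}"

definition diam_le :: "'a set \<Rightarrow> ('a \<Rightarrow> 'a \<Rightarrow> real) \<Rightarrow> real \<Rightarrow> 'a set set" where
  "diam_le X d r = {A. A \<subseteq> X \<and> (\<forall>x\<in>A. \<forall>y\<in>A. d x y \<le> r)}"

definition metric_ub_covers :: "'a set \<Rightarrow> ('a \<Rightarrow> 'a \<Rightarrow> real) \<Rightarrow> 'a set set set" where
  "metric_ub_covers X d =
     {\<U>. is_cover X \<U> \<and> (\<exists>r>0. refines \<U> (diam_le X d r))}"

definition left_invariant :: "('a, 'b) monoid_scheme \<Rightarrow> ('a \<Rightarrow> 'a \<Rightarrow> real) \<Rightarrow> bool" where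
  "left_invariant G d \<longleftrightarrow>
     (\<forall>g\<in>carrier G. \<forall>x\<in>carrier G. \<forall>y\<in>carrier G. d (g \<otimes>\<^bsub>G\<^esub> x) (g \<otimes>\<^bsub>G\<^esub> y) = d x y)"

end

theory Submission
  imports Defs
begin

lemma lsg_basic:
  assumes "large_scale_group G B"
  shows "group G" "B \<subseteq> Pow (carrier G)" "\<Union>B = carrier G"
    "\<And>A C. A \<in> B \<Longrightarrow> C \<subseteq> A \<Longrightarrow> C \<in> B"
    "\<And>A C. A \<in> B \<Longrightarrow> C \<in> B \<Longrightarrow> A \<union> C \<in> B"
    "\<And>A. A \<in> B \<Longrightarrow> set_inv\<^bsub>G\<^esub> A \<in> B"
    "\<And>A C. A \<in> B \<Longrightarrow> C \<in> B \<Longrightarrow> A <#>\<^bsub>G\<^esub> C \<in> B"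
  using assms unfolding large_scale_group_def bornology_def by blast+

lemma lsg_single:
  assumes "large_scale_group G B" "g \<in> carrier G"
  shows "{g} \<in> B"
proof -
  from lsg_basic(3)[OF assms(1)] assms(2) obtain A where "A \<in> B" "g \<in> A" by blast
  then show ?thesis using lsg_basic(4)[OF assms(1)] by blast
qed

lemma lsg_coset:
  assumes "large_scale_group G B" "g \<in> carrier G" "A \<in> B"
  shows "g <#\<^bsub>G\<^esub> A \<in> B"
  using lsg_basic(7)[OF assms(1) lsg_single[OF assms(1,2)] assms(3)]
  by (simp add: l_coset_eq_set_mult)

lemma dir12:
  fixes G :: "('a, 'b) monoid_scheme" (structure)
  assumes LS: "large_scale_group G B" and M: "Metric_space (carrier G) d"
    and EQ: "group_ub_covers G B = metric_ub_covers (carrier G) d"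
  shows "\<exists>C. countable C \<and> bornology_basis B C"
proof -
  interpret group G using lsg_basic(1)[OF LS] .
  interpret Metric_space "carrier G" d by (rule M)
  define ball where "ball n = {y \<in> carrier G. d \<one>\<^bsub>G\<^esub> y \<le> real n}" for n :: nat
  have ballB: "ball n \<in> B" for n
  proof -
    define U where "U = (\<lambda>x. {y \<in> carrier G. d x y \<le> real n}) ` carrier G"
    have cov: "is_cover (carrier G) U"
      unfolding is_cover_def U_def
    proof (intro conjI)
      show "(\<lambda>x. {y \<in> carrier G. d x y \<le> real n}) ` carrier G \<subseteq> Pow (carrier G)" by blast
      show "\<Union> ((\<lambda>x. {y \<in> carrier G. d x y \<le> real n}) ` carrier G) = carrier G"
      proof
        show "carrier G \<subseteq> \<Union> ((\<lambda>x. {y \<in> carrier G. d x y \<le> real n}) ` carrier G)"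
        proof
          fix y assume "y \<in> carrier G"
          then have "y \<in> {z \<in> carrier G. d y z \<le> real n}" by simp
          then show "y \<in> \<Union> ((\<lambda>x. {y \<in> carrier G. d x y \<le> real n}) ` carrier G)"
            using \<open>y \<in> carrier G\<close> by blast
        qed
      qed blast
    qed
    have "{y \<in> carrier G. d x y \<le> real n} \<in> diam_le (carrier G) d (2 * real n + 1)"
      if x: "x \<in> carrier G" for x
      unfolding diam_le_def
    proof (intro CollectI conjI ballI)
      fix a b assume a: "a \<in> {y \<in> carrier G. d x y \<le> real n}"
        and b: "b \<in> {y \<in> carrier G. d x y \<le> real n}"
      have "d a b \<le> d a x + d x b" using a b x triangle by blast
      also have "\<dots> = d x a + d x b" by (simp add: commute)
      finally show "d a b \<le> 2 * real n + 1" using a b by auto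
    qed auto
    then have "refines U (diam_le (carrier G) d (2 * real n + 1))"
      unfolding refines_def U_def by blast
    then have "U \<in> metric_ub_covers (carrier G) d"
      unfolding metric_ub_covers_def using cov
      by (auto intro!: exI[of _ "2 * real n + 1"])
    then have "U \<in> group_ub_covers G B" using EQ by simp
    then obtain B0 where B0: "B0 \<in> B" "refines U ((\<lambda>g. g <# B0) ` carrier G)"
      unfolding group_ub_covers_def by blast
    have "ball n \<in> U" unfolding U_def ball_def by auto
    then obtain g where g: "g \<in> carrier G" "ball n \<subseteq> g <# B0"
      using B0(2) unfolding refines_def by blast
    show ?thesis using lsg_basic(4)[OF LS lsg_coset[OF LS g(1) B0(1)] g(2)] .
  qed
  have cov: "\<exists>n. A \<subseteq> ball n" if A: "A \<in> B" for A
  proof (cases "A = {}")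
    case True then show ?thesis by auto
  next
    case False
    then obtain a where a: "a \<in> A" by blast
    have Ac: "A \<subseteq> carrier G" using A lsg_basic(2)[OF LS] by blast
    have ac: "a \<in> carrier G" using a Ac by blast
    define V where "V = (\<lambda>g. g <# A) ` carrier G"
    have "is_cover (carrier G) V"
      unfolding is_cover_def V_def
    proof (intro conjI)
      show "(\<lambda>g. g <# A) ` carrier G \<subseteq> Pow (carrier G)"
        using Ac l_coset_subset_G by blast
      show "\<Union> ((\<lambda>g. g <# A) ` carrier G) = carrier G"
      proof
        show "\<Union> ((\<lambda>g. g <# A) ` carrier G) \<subseteq> carrier G" using Ac l_coset_subset_G by blast
        show "carrier G \<subseteq> \<Union> ((\<lambda>g. g <# A) ` carrier G)"
        proof
          fix y assume y: "y \<in> carrier G"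
          have "y = (y \<otimes> inv a) \<otimes> a" using y ac by (simp add: m_assoc)
          then have "y \<in> (y \<otimes> inv a) <# A" unfolding l_coset_def using a by blast
          moreover have "y \<otimes> inv a \<in> carrier G" using y ac by simp
          ultimately show "y \<in> \<Union> ((\<lambda>g. g <# A) ` carrier G)" by (metis UN_I)
        qed
      qed
    qed
    moreover have "refines V ((\<lambda>g. g <# A) ` carrier G)"
      unfolding refines_def V_def by blast
    ultimately have "V \<in> group_ub_covers G B" unfolding group_ub_covers_def using A by (intro CollectI conjI bexI)
    then have "V \<in> metric_ub_covers (carrier G) d" using EQ by simp
    then obtain r where r: "r > 0" "refines V (diam_le (carrier G) d r)"
      unfolding metric_ub_covers_def by blast
    have "A \<in> V" unfolding V_def using lcos_mult_one[OF Ac] one_closed by (metis image_eqI)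
    then obtain D where D: "A \<subseteq> D" "D \<in> diam_le (carrier G) d r"
      using r(2) unfolding refines_def by blast
    then have D2: "\<forall>x\<in>D. \<forall>y\<in>D. d x y \<le> r" unfolding diam_le_def by blast
    obtain n :: nat where n: "d \<one> a + r \<le> real n" using real_arch_simple by blast
    have "A \<subseteq> ball n"
    proof
      fix y assume y: "y \<in> A"
      have "d \<one> y \<le> d \<one> a + d a y" using triangle ac Ac y by blast
      also have "\<dots> \<le> d \<one> a + r" using D(1) D2 a y by (simp add: subset_iff)
      finally show "y \<in> ball n" unfolding ball_def using n y Ac by auto
    qed
    then show ?thesis by blast
  qed
  have "countable (range ball)" by simp
  moreover have "bornology_basis B (range ball)"
    unfolding bornology_basis_def
  proof (intro conjI ballI)
    show "range ball \<subseteq> B" using ballB by blast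
    fix A assume "A \<in> B"
    then obtain n where "A \<subseteq> ball n" using cov by blast
    then show "\<exists>C\<in>range ball. A \<subseteq> C" by blast
  qed
  ultimately show ?thesis by blast
qed

fun Kseq :: "('a, 'b) monoid_scheme \<Rightarrow> (nat \<Rightarrow> 'a set) \<Rightarrow> nat \<Rightarrow> 'a set" where
  "Kseq G c 0 = {\<one>\<^bsub>G\<^esub>}"
| "Kseq G c (Suc n) = (Kseq G c n <#>\<^bsub>G\<^esub> Kseq G c n) \<union> c n"

lemma dir23:
  fixes G :: "('a, 'b) monoid_scheme" (structure)
  assumes LS: "large_scale_group G B" and CC: "countable C" and BC: "bornology_basis B C"
  shows "\<exists>d. Metric_space (carrier G) d \<and> left_invariant G d \<and>
                    group_ub_covers G B = metric_ub_covers (carrier G) d"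
proof -
  interpret group G using lsg_basic(1)[OF LS] .
  have oneB: "{\<one>} \<in> B" using lsg_single[OF LS] by simp
  have CB: "C \<subseteq> B" and CB2: "\<And>A. A \<in> B \<Longrightarrow> \<exists>D\<in>C. A \<subseteq> D"
    using BC unfolding bornology_basis_def by blast+
  have Cne: "C \<noteq> {}" using CB2[OF oneB] by blast
  define c where "c n = from_nat_into C n" for n
  have cC: "c n \<in> C" for n unfolding c_def using Cne by (simp add: from_nat_into)
  have cB: "c n \<in> B" for n using cC CB by blast
  have cr: "\<exists>n. D = c n" if "D \<in> C" for D
    unfolding c_def using from_nat_into_surj[OF CC that] by metis
  define K where "K = Kseq G c"
  have K0: "K 0 = {\<one>}" unfolding K_def by simp
  have KS: "K (Suc n) = (K n <#> K n) \<union> c n" for n unfolding K_def by simp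
  have Bsub: "A \<in> B \<Longrightarrow> A \<subseteq> carrier G" for A using lsg_basic(2)[OF LS] by blast
  have Kc: "K n \<subseteq> carrier G" for n
  proof (induction n)
    case 0 then show ?case using K0 by simp
  next
    case (Suc n)
    have "K n <#> K n \<subseteq> carrier G" using Suc unfolding set_mult_def by blast
    then show ?case using KS Bsub[OF cB] by auto
  qed
  have K1: "\<one> \<in> K n" for n
  proof (induction n)
    case 0 then show ?case using K0 by simp
  next
    case (Suc n)
    have "\<one> \<otimes> \<one> \<in> K n <#> K n" using Suc unfolding set_mult_def by blast
    then show ?case using KS by simp
  qed
  have Kmul: "x \<otimes> y \<in> K (Suc n)" if "x \<in> K n" "y \<in> K n" for x y n
    using that KS unfolding set_mult_def by blast
  have Kstep: "K n \<subseteq> K (Suc n)" for n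
  proof
    fix x assume x: "x \<in> K n"
    have "x \<otimes> \<one> \<in> K (Suc n)" using Kmul[OF x K1] .
    then show "x \<in> K (Suc n)" using x Kc by (metis r_one subsetD)
  qed
  have Kmono: "m \<le> n \<Longrightarrow> K m \<subseteq> K n" for m n
    using lift_Suc_mono_le[of K, OF Kstep] by blast
  have KB: "K n \<in> B" for n
  proof (induction n)
    case 0 then show ?case using K0 oneB by simp
  next
    case (Suc n) then show ?case using KS lsg_basic(5,7)[OF LS] cB by simp
  qed
  have Kcov: "\<exists>n. A \<subseteq> K n" if AB: "A \<in> B" for A
  proof -
    obtain D where "D \<in> C" "A \<subseteq> D" using CB2[OF AB] by blast
    then obtain n where "A \<subseteq> c n" using cr by blast
    then show ?thesis using KS by blast
  qed
  define l where "l g = (LEAST n. g \<in> K n)" for g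
  have lex: "\<exists>n. g \<in> K n" if "g \<in> carrier G" for g
    using Kcov[OF lsg_single[OF LS that]] by blast
  have lmem: "g \<in> K (l g)" if "g \<in> carrier G" for g
    unfolding l_def using lex[OF that] by (rule LeastI_ex)
  have lle: "l g \<le> n" if "g \<in> K n" for g n
    unfolding l_def using that by (rule Least_le)
  have l0: "l g = 0 \<longleftrightarrow> g = \<one>" if "g \<in> carrier G" for g
  proof
    assume "l g = 0" then show "g = \<one>" using lmem[OF that] K0 by simp
  next
    assume "g = \<one>" then show "l g = 0" using lle[of g 0] K0 by simp
  qed
  have lmul: "l (x \<otimes> y) \<le> l x + l y" if x: "x \<in> carrier G" and y: "y \<in> carrier G" for x y
  proof (cases "l x = 0 \<or> l y = 0")
    case True
    then show ?thesis using l0 x y by auto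
  next
    case False
    define m where "m = max (l x) (l y)"
    have "x \<in> K m" using Kmono[of "l x" m] lmem[OF x] unfolding m_def by auto
    moreover have "y \<in> K m" using Kmono[of "l y" m] lmem[OF y] unfolding m_def by auto
    ultimately have "x \<otimes> y \<in> K (Suc m)" by (rule Kmul)
    then have "l (x \<otimes> y) \<le> Suc m" by (rule lle)
    then show ?thesis using False unfolding m_def by auto
  qed
  define d where "d x y = real (max (l (inv x \<otimes> y)) (l (inv y \<otimes> x)))" for x y
  have inv_id: "inv x \<otimes> z = (inv x \<otimes> y) \<otimes> (inv y \<otimes> z)"
    if "x \<in> carrier G" "y \<in> carrier G" "z \<in> carrier G" for x y z
    using that by (simp add: m_assoc) (simp add: m_assoc[symmetric])
  have Mspace: "Metric_space (carrier G) d"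
  proof
    fix x y show "0 \<le> d x y" unfolding d_def by simp
    show "d x y = d y x" unfolding d_def by (simp add: max.commute)
  next
    fix x y assume x: "x \<in> carrier G" and y: "y \<in> carrier G"
    have e: "inv x \<otimes> y = \<one> \<longleftrightarrow> x = y" using x y
      by (metis inv_closed inv_equality l_inv r_inv inv_inv)
    show "d x y = 0 \<longleftrightarrow> x = y" unfolding d_def using l0 x y e
      by (metis inv_closed m_closed max_nat.eq_neutr_iff of_nat_eq_0_iff)
  next
    fix x y z assume x: "x \<in> carrier G" and y: "y \<in> carrier G" and z: "z \<in> carrier G"
    have a: "l (inv x \<otimes> z) \<le> l (inv x \<otimes> y) + l (inv y \<otimes> z)"
      using inv_id[OF x y z] lmul x y z by (metis inv_closed m_closed)
    have b: "l (inv z \<otimes> x) \<le> l (inv z \<otimes> y) + l (inv y \<otimes> x)"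
      using inv_id[OF z y x] lmul x y z by (metis inv_closed m_closed)
    show "d x z \<le> d x y + d y z" unfolding d_def using a b by simp
  qed
  have linv: "left_invariant G d"
    unfolding left_invariant_def
  proof (intro ballI)
    fix g x y assume g: "g \<in> carrier G" and x: "x \<in> carrier G" and y: "y \<in> carrier G"
    have "inv (g \<otimes> x) \<otimes> (g \<otimes> y) = inv x \<otimes> y" using g x y
      by (simp add: inv_mult_group m_assoc[symmetric]) (simp add: m_assoc)
    moreover have "inv (g \<otimes> y) \<otimes> (g \<otimes> x) = inv y \<otimes> x" using g x y
      by (simp add: inv_mult_group m_assoc[symmetric]) (simp add: m_assoc)
    ultimately show "d (g \<otimes> x) (g \<otimes> y) = d x y" unfolding d_def by simp
  qed
  have ub1: "U \<in> metric_ub_covers (carrier G) d" if U: "U \<in> group_ub_covers G B" for U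
  proof -
    obtain B0 where cov: "is_cover (carrier G) U" and B0: "B0 \<in> B"
      and ref: "refines U ((\<lambda>g. g <# B0) ` carrier G)"
      using U unfolding group_ub_covers_def by blast
    have "B0 \<union> set_inv B0 \<in> B" using lsg_basic(5,6)[OF LS B0] B0 by blast
    then obtain m where m: "B0 \<union> set_inv B0 \<subseteq> K m" using Kcov by blast
    have B0c: "B0 \<subseteq> carrier G" using Bsub[OF B0] .
    have dl: "g <# B0 \<in> diam_le (carrier G) d (real (Suc m))" if g: "g \<in> carrier G" for g
      unfolding diam_le_def
    proof (intro CollectI conjI ballI)
      show "g <# B0 \<subseteq> carrier G" using l_coset_subset_G[OF B0c g] .
      fix x y assume x: "x \<in> g <# B0" and y: "y \<in> g <# B0"
      obtain b1 where b1: "b1 \<in> B0" "x = g \<otimes> b1" using x unfolding l_coset_def by blast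
      obtain b2 where b2: "b2 \<in> B0" "y = g \<otimes> b2" using y unfolding l_coset_def by blast
      have b1c: "b1 \<in> carrier G" and b2c: "b2 \<in> carrier G" using b1 b2 B0c by auto
      have i1: "inv b1 \<in> K m" and i2: "inv b2 \<in> K m"
        using m b1 b2 unfolding SET_INV_def by blast+
      have k1: "b1 \<in> K m" and k2: "b2 \<in> K m" using m b1 b2 by blast+
      have e1: "inv x \<otimes> y = inv b1 \<otimes> b2" using g b1c b2c b1 b2
        by (simp add: inv_mult_group m_assoc[symmetric]) (simp add: m_assoc)
      have e2: "inv y \<otimes> x = inv b2 \<otimes> b1" using g b1c b2c b1 b2
        by (simp add: inv_mult_group m_assoc[symmetric]) (simp add: m_assoc)
      have "l (inv x \<otimes> y) \<le> Suc m" unfolding e1 by (rule lle, rule Kmul[OF i1 k2])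
      moreover have "l (inv y \<otimes> x) \<le> Suc m" unfolding e2 by (rule lle, rule Kmul[OF i2 k1])
      ultimately show "d x y \<le> real (Suc m)" unfolding d_def by simp
    qed
    have "refines U (diam_le (carrier G) d (real (Suc m)))"
      using ref dl unfolding refines_def by blast
    then show ?thesis unfolding metric_ub_covers_def using cov
      by (intro CollectI conjI exI[of _ "real (Suc m)"]) auto
  qed
  have ub2: "U \<in> group_ub_covers G B" if U: "U \<in> metric_ub_covers (carrier G) d" for U
  proof -
    obtain r where cov: "is_cover (carrier G) U" and r: "r > 0"
      and ref: "refines U (diam_le (carrier G) d r)"
      using U unfolding metric_ub_covers_def by blast
    obtain N :: nat where N: "r \<le> real N" using real_arch_simple by blast
    have sub: "\<exists>g\<in>carrier G. D \<subseteq> g <# K N" if D: "D \<in> diam_le (carrier G) d r" for D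
    proof (cases "D = {}")
      case True then show ?thesis by blast
    next
      case False
      then obtain x where x: "x \<in> D" by blast
      have Dc: "D \<subseteq> carrier G" and Dd: "\<forall>a\<in>D. \<forall>b\<in>D. d a b \<le> r"
        using D unfolding diam_le_def by blast+
      have xc: "x \<in> carrier G" using x Dc by blast
      have "D \<subseteq> x <# K N"
      proof
        fix y assume y: "y \<in> D"
        have yc: "y \<in> carrier G" using y Dc by blast
        have "real (l (inv x \<otimes> y)) \<le> d x y" unfolding d_def by simp
        also have "\<dots> \<le> r" using Dd x y by blast
        finally have "l (inv x \<otimes> y) \<le> N" using N by linarith
        then have "inv x \<otimes> y \<in> K N" using Kmono lmem xc yc by (meson inv_closed m_closed subsetD)
        moreover have "y = x \<otimes> (inv x \<otimes> y)" using xc yc by (simp add: m_assoc[symmetric])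
        ultimately show "y \<in> x <# K N" unfolding l_coset_def by blast
      qed
      then show ?thesis using xc by blast
    qed
    have "refines U ((\<lambda>g. g <# K N) ` carrier G)"
      unfolding refines_def
    proof
      fix V assume "V \<in> U"
      then obtain D where "V \<subseteq> D" "D \<in> diam_le (carrier G) d r" using ref unfolding refines_def by blast
      then obtain g where g: "g \<in> carrier G" "V \<subseteq> g <# K N" using sub by (meson order_trans)
      then show "\<exists>W\<in>(\<lambda>g. g <# K N) ` carrier G. V \<subseteq> W" by (intro bexI[of _ "g <# K N"] imageI)
    qed
    then show ?thesis unfolding group_ub_covers_def using cov KB[of N] by (intro CollectI conjI bexI[of _ "K N"])
  qed
  have "group_ub_covers G B = metric_ub_covers (carrier G) d"
  proof
    show "group_ub_covers G B \<subseteq> metric_ub_covers (carrier G) d" using ub1 by (rule subsetI)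
    show "metric_ub_covers (carrier G) d \<subseteq> group_ub_covers G B" using ub2 by (rule subsetI)
  qed
  then show ?thesis using Mspace linv by (intro exI[of _ d] conjI)
qed

theorem proposition7p1:
  fixes G :: "('a, 'b) monoid_scheme" and \<B> :: "'a set set"
  assumes "large_scale_group G \<B>"
  shows "((\<exists>d. Metric_space (carrier G) d \<and> group_ub_covers G \<B> = metric_ub_covers (carrier G) d)
           \<longleftrightarrow> (\<exists>\<C>. countable \<C> \<and> bornology_basis \<B> \<C>))
       \<and> ((\<exists>\<C>. countable \<C> \<and> bornology_basis \<B> \<C>)
           \<longleftrightarrow> (\<exists>d. Metric_space (carrier G) d \<and> left_invariant G d \<and>
                    group_ub_covers G \<B> = metric_ub_covers (carrier G) d))"
proof -
  have a: "(\<exists>d. Metric_space (carrier G) d \<and> group_ub_covers G \<B> = metric_ub_covers (carrier G) d)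
           \<Longrightarrow> (\<exists>\<C>. countable \<C> \<and> bornology_basis \<B> \<C>)"
    using dir12[OF assms] by (elim exE conjE)
  have b: "(\<exists>\<C>. countable \<C> \<and> bornology_basis \<B> \<C>) \<Longrightarrow>
     (\<exists>d. Metric_space (carrier G) d \<and> left_invariant G d \<and>
                    group_ub_covers G \<B> = metric_ub_covers (carrier G) d)"
    using dir23[OF assms] by (elim exE conjE)
  show ?thesis using a b by meson
qed

end
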